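(* Let $l,t,s,n$ be integers with $t\geq l$, $s\geq l+1\geq 3$ and $n\geq 2\binom{3s}{2}$. Then for every integer $x$ with $1\leq x\leq l-1$, $$ex(n,\{K_{l,t},M_{s+1}\},x)\leq (l-1)n+ex(2(s-l+1)+1,K_{l,t})-\frac{l(l-1)}{2}.$$
   Context: All graphs are finite and simple. $ex(m,K_{l,t})$ is the maximum number of edges of an $m$-vertex graph with no copy of the complete bipartite graph $K_{l,t}$; $M_{s+1}$ is the matching of $s+1$ disjoint edges. For a graph $G$ with matching number at most $s$, say $X\subseteq V(G)$ is admissible if $|X|+\sum_{i=1}^m\lfloor |V(C_i)|/2\rfloor\leq s$, where $C_1,\dots,C_m$ are the components of $G-X$; let $x(G)$ be the maximum size of an admissible set. Let $\mathscr{G}_x$ be the set of graphs on $n$ vertices containing neither $K_{l,t}$ nor $M_{s+1}$ as a subgraph and with $x(G)=x$, and $ex(n,\{K_{l,t},M_{s+1}\},x)=\max_{G\in\mathscr{G}_x}e(G)$. *)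

theory Defs
  imports Complex_Main
begin

definition simple_graph :: "'a set \<Rightarrow> 'a set set \<Rightarrow> bool" where
  "simple_graph V E \<longleftrightarrow> finite V \<and>
     (\<forall>e\<in>E. \<exists>a b. e = {a, b} \<and> a \<noteq> b \<and> a \<in> V \<and> b \<in> V)"

definition contains_Klt :: "'a set \<Rightarrow> 'a set set \<Rightarrow> nat \<Rightarrow> nat \<Rightarrow> bool" where
  "contains_Klt V E l t \<longleftrightarrow> (\<exists>A B. A \<subseteq> V \<and> B \<subseteq> V \<and> A \<inter> B = {} \<and>
     card A = l \<and> card B = t \<and> (\<forall>a\<in>A. \<forall>b\<in>B. {a, b} \<in> E))"

definition contains_matching :: "'a set set \<Rightarrow> nat \<Rightarrow> bool" where
  "contains_matching E k \<longleftrightarrow> (\<exists>M\<subseteq>E. finite M \<and> card M = k \<and>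
     (\<forall>e1\<in>M. \<forall>e2\<in>M. e1 \<noteq> e2 \<longrightarrow> e1 \<inter> e2 = {}))"

definition components_minus :: "'a set \<Rightarrow> 'a set set \<Rightarrow> 'a set \<Rightarrow> 'a set set" where
  "components_minus V E X =
     (let W = V - X; adj = (\<lambda>u v. u \<in> W \<and> v \<in> W \<and> {u, v} \<in> E)
      in (\<lambda>v. {u \<in> W. adj\<^sup>*\<^sup>* v u}) ` W)"

definition admissible :: "'a set \<Rightarrow> 'a set set \<Rightarrow> nat \<Rightarrow> 'a set \<Rightarrow> bool" where
  "admissible V E s X \<longleftrightarrow> X \<subseteq> V \<and>
     card X + (\<Sum>C\<in>components_minus V E X. card C div 2) \<le> s"

definition xnum :: "'a set \<Rightarrow> 'a set set \<Rightarrow> nat \<Rightarrow> nat" where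
  "xnum V E s = Max {card X | X. admissible V E s X}"

definition ex_Klt :: "nat \<Rightarrow> nat \<Rightarrow> nat \<Rightarrow> nat" where
  "ex_Klt m l t = Max {card E | E. simple_graph {0..<m} E \<and> \<not> contains_Klt {0..<m} E l t}"

text \<open>ex(n, {K_{l,t}, M_{s+1}}, x); the maximum over the (finite) family, 0 if the family is empty.\<close>
definition ex_KM :: "nat \<Rightarrow> nat \<Rightarrow> nat \<Rightarrow> nat \<Rightarrow> nat \<Rightarrow> nat" where
  "ex_KM n l t s x = Sup {card E | E. simple_graph {0..<n} E \<and> \<not> contains_Klt {0..<n} E l t
      \<and> \<not> contains_matching E (s + 1) \<and> xnum {0..<n} E s = x}"

end

theory Submission
  imports Defs
begin
definition matching :: "'a set set \<Rightarrow> 'a set set \<Rightarrow> bool" where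
  "matching E M \<longleftrightarrow> M \<subseteq> E \<and> (\<forall>e1\<in>M. \<forall>e2\<in>M. e1 \<noteq> e2 \<longrightarrow> e1 \<inter> e2 = {})"

lemma sg_finite_E: "simple_graph V E \<Longrightarrow> finite E"
proof -
  assume a: "simple_graph V E"
  hence "E \<subseteq> Pow V" unfolding simple_graph_def by auto
  moreover have "finite (Pow V)" using a unfolding simple_graph_def by simp
  ultimately show ?thesis by (rule finite_subset)
qed

lemma sg_edge: "simple_graph V E \<Longrightarrow> e \<in> E \<Longrightarrow> \<exists>a b. e = {a,b} \<and> a \<noteq> b \<and> a \<in> V \<and> b \<in> V"
  unfolding simple_graph_def by blast

lemma sg_edge_other: assumes "simple_graph V E" "e \<in> E" "x \<in> e" shows "\<exists>y. e = {x,y} \<and> x \<noteq> y \<and> x \<in> V \<and> y \<in> V"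
proof -
  obtain a b where ab: "e = {a,b}" "a \<noteq> b" "a \<in> V" "b \<in> V" using sg_edge[OF assms(1,2)] by blast
  show ?thesis
  proof (cases "x = a")
    case True
    then show ?thesis using ab by blast
  next
    case False
    then have "x = b" using ab assms(3) by blast
    then show ?thesis using ab by (intro exI[of _ a]) auto
  qed
qed

lemma sg_sub: "simple_graph V E \<Longrightarrow> e \<in> E \<Longrightarrow> e \<subseteq> V"
  unfolding simple_graph_def by auto

lemma matching_cover_sub: assumes "simple_graph V E" "matching E M" shows "\<Union>M \<subseteq> V"
proof (rule Union_least)
  fix e assume "e \<in> M"
  hence "e \<in> E" using assms(2) unfolding matching_def by auto
  thus "e \<subseteq> V" using sg_sub[OF assms(1)] by simp
qed

lemma sg_card2: "simple_graph V E \<Longrightarrow> e \<in> E \<Longrightarrow> card e = 2"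
  unfolding simple_graph_def by auto

lemma matching_finite: "simple_graph V E \<Longrightarrow> matching E M \<Longrightarrow> finite M"
  unfolding matching_def using sg_finite_E finite_subset by auto

lemma matching_cover_card: assumes "simple_graph V E" "matching E M"
  shows "card (\<Union>M) = 2 * card M"
proof -
  have fM: "finite M" using matching_finite assms .
  have "card (\<Union>M) = (\<Sum>e\<in>M. card e)"
  proof (rule card_Union_disjoint)
    show "pairwise disjnt M" using assms(2) unfolding matching_def pairwise_def disjnt_def by auto
    show "\<And>A. A \<in> M \<Longrightarrow> finite A"
    proof -
      fix A assume "A \<in> M"
      hence "card A = 2" using sg_card2[OF assms(1)] assms(2) unfolding matching_def by auto
      thus "finite A" by (intro card_ge_0_finite) simp
    qed
  qed
  also have "\<dots> = (\<Sum>e\<in>M. 2)" using assms sg_card2 unfolding matching_def by (intro sum.cong) auto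
  finally show ?thesis by simp
qed

lemma contains_matchingI: assumes "simple_graph V E" "matching E M" "card M \<ge> k"
  shows "contains_matching E k"
proof -
  obtain M' where "M' \<subseteq> M" "card M' = k" "finite M'" using obtain_subset_with_card_n[OF assms(3)] by blast
  moreover have "\<forall>e1\<in>M'. \<forall>e2\<in>M'. e1 \<noteq> e2 \<longrightarrow> e1 \<inter> e2 = {}"
    using calculation(1) assms(2) unfolding matching_def by (meson subsetD)
  moreover have "M' \<subseteq> E" using calculation(1) assms(2) unfolding matching_def by auto
  ultimately show ?thesis unfolding contains_matching_def by blast
qed

lemma contains_matchingD: "contains_matching E k \<Longrightarrow> \<exists>M. matching E M \<and> card M = k"
  unfolding contains_matching_def matching_def by blast

lemma matching_insert: assumes "matching E M" "e \<in> E" "\<forall>g\<in>M. g \<inter> e = {}" "e \<notin> M"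
  shows "matching E (insert e M)"
  using assms unfolding matching_def by blast

lemma gallai:
  fixes V :: "'a set" and E
  assumes sg: "simple_graph V E"
    and kmax: "\<forall>M. matching E M \<longrightarrow> card M \<le> k"
    and ess: "\<forall>v\<in>V. \<exists>M. matching E M \<and> card M = k \<and> v \<notin> \<Union>M"
  shows "matching E M \<Longrightarrow> card M = k \<Longrightarrow> u \<notin> \<Union>M \<Longrightarrow> v \<notin> \<Union>M \<Longrightarrow> u \<noteq> v
     \<Longrightarrow> ((\<lambda>u v. u \<in> V \<and> v \<in> V \<and> {u,v} \<in> E) ^^ n) u v \<Longrightarrow> False"
proof (induction n arbitrary: M u v rule: less_induct)
  case (less n)
  define A where "A = (\<lambda>u v. u \<in> V \<and> v \<in> V \<and> {u,v} \<in> E)"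
  have fE: "finite E" using sg_finite_E[OF sg] .
  have one: "False" if "matching E M'" "card M' = k" "u' \<notin> \<Union>M'" "v' \<notin> \<Union>M'" "u' \<noteq> v'" "A u' v'" for M' u' v'
  proof -
    have "{u',v'} \<notin> M'" using that(3) by auto
    hence "matching E (insert {u',v'} M')" using that unfolding A_def
      by (intro matching_insert) auto
    hence "card (insert {u',v'} M') \<le> k" using kmax by blast
    moreover have "finite M'" using matching_finite[OF sg that(1)] .
    ultimately show False using \<open>{u',v'} \<notin> M'\<close> that(2) by simp
  qed
  show False
  proof (cases n)
    case 0
    then show ?thesis using less.prems by simp
  next
    case (Suc n1)
    note n1 = Suc
    show ?thesis
    proof (cases n1)
      case 0
      then have "A u v" using less.prems(6) n1 unfolding A_def by (simp add: eq_OO)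
      then show ?thesis using less.prems(1-5) one[of M u v] by blast
    next
      case (Suc n2)
      have "(A ^^ Suc n1) u v" using less.prems(6) n1 unfolding A_def by simp
      then obtain w where uw: "A u w" and wv: "(A ^^ n1) w v"
        using relpowp_Suc_D2 by metis
      have wu: "w \<noteq> u" using sg_card2[OF sg, of "{u,w}"] uw unfolding A_def by auto
      have lt1: "1 < n" using n1 Suc by simp
      have wM: "w \<in> \<Union>M"
      proof (rule ccontr)
        assume "w \<notin> \<Union>M"
        then show False using less.IH[OF lt1, of M u w] less.prems uw wu unfolding A_def by auto
      qed
      hence wv': "w \<noteq> v" using less.prems by auto
      have wV: "w \<in> V" using uw unfolding A_def by auto
      define P where "P = (\<lambda>N. matching E N \<and> card N = k \<and> w \<notin> \<Union>N)"
      obtain N0 where "P N0" using ess wV unfolding P_def by blast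
      have "\<forall>N. P N \<longrightarrow> card (M \<inter> N) < Suc (card E)"
        using less.prems(1) fE unfolding P_def matching_def by (auto intro!: card_mono le_imp_less_Suc)
      then obtain N where PN: "P N" and Nmax: "\<forall>N'. P N' \<longrightarrow> card (M \<inter> N') \<le> card (M \<inter> N)"
        using ex_has_greatest_nat[of P N0 "\<lambda>N. card (M \<inter> N)"] \<open>P N0\<close> by blast
      have mN: "matching E N" "card N = k" "w \<notin> \<Union>N" using PN unfolding P_def by auto
      have uN: "u \<in> \<Union>N"
      proof (rule ccontr)
        assume "u \<notin> \<Union>N"
        moreover have "A w u" using uw unfolding A_def by (auto simp: insert_commute)
        ultimately show False using less.IH[OF lt1, of N w u] mN wu unfolding A_def by auto
      qed
      have vN: "v \<in> \<Union>N"
      proof (rule ccontr)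
        assume "v \<notin> \<Union>N"
        moreover have "n1 < n" using n1 by simp
        ultimately show False using less.IH[of n1 N w v] mN wv' wv unfolding A_def by auto
      qed
      have cM: "card (\<Union>M) = 2 * k" using matching_cover_card[OF sg less.prems(1)] less.prems(2) by simp
      have cN: "card (\<Union>N) = 2 * k" using matching_cover_card[OF sg mN(1)] mN(2) by simp
      have fV: "finite V" using sg unfolding simple_graph_def by simp
      have "\<Union>M \<subseteq> V" using matching_cover_sub[OF sg less.prems(1)] .
      hence fM1: "finite (\<Union>M)" using fV by (rule finite_subset)
      have "\<Union>N \<subseteq> V" using matching_cover_sub[OF sg mN(1)] .
      hence fM2: "finite (\<Union>N)" using fV by (rule finite_subset)
      note fM = fM1 fM2
      have "card (\<Union>N - \<Union>M) \<ge> 2"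
      proof -
        have "{u,v} \<subseteq> \<Union>N - \<Union>M" using uN vN less.prems by auto
        hence "card {u,v} \<le> card (\<Union>N - \<Union>M)" using fM by (intro card_mono) auto
        thus ?thesis using less.prems(5) by simp
      qed
      moreover have "card (\<Union>N - \<Union>M) = card (\<Union>M - \<Union>N)"
        using fM cM cN by (simp add: card_Diff_subset_Int Int_commute)
      ultimately have c2: "card (\<Union>M - \<Union>N) \<ge> 2" by simp
      obtain x where xM: "x \<in> \<Union>M" and xN: "x \<notin> \<Union>N" and xw: "x \<noteq> w"
      proof -
        have "\<not> (\<Union>M - \<Union>N \<subseteq> {w})"
        proof
          assume "\<Union>M - \<Union>N \<subseteq> {w}"
          hence "card (\<Union>M - \<Union>N) \<le> card {w}" by (intro card_mono) auto
          thus False using c2 by simp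
        qed
        thus ?thesis using that by blast
      qed
      obtain e where eM: "e \<in> M" and xe: "x \<in> e" using xM by blast
      have eE: "e \<in> E" using eM less.prems(1) unfolding matching_def by blast
      obtain y where e: "e = {x,y}" "x \<noteq> y" using sg_edge_other[OF sg eE xe] by blast
      have eN: "e \<notin> N" using xN xe by blast
      have yN: "y \<in> \<Union>N"
      proof (rule ccontr)
        assume yN: "y \<notin> \<Union>N"
        have "matching E (insert e N)"
          using mN(1) eE eN xN yN e(1) by (intro matching_insert) auto
        hence "card (insert e N) \<le> k" using kmax by blast
        thus False using eN mN(2) matching_finite[OF sg mN(1)] by simp
      qed
      obtain f where fN: "f \<in> N" and yf: "y \<in> f" using yN by blast
      have fe: "f \<noteq> e" using fN eN by blast
      have fM': "f \<notin> M"
      proof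
        assume "f \<in> M"
        then have "e \<inter> f = {}" using eM fe less.prems(1) unfolding matching_def by blast
        thus False using yf e by auto
      qed
      define N' where "N' = insert e (N - {f})"
      have mN': "matching E N'"
        unfolding N'_def
      proof (rule matching_insert)
        show "matching E (N - {f})" using mN(1) unfolding matching_def by auto
        show "e \<in> E" by (rule eE)
        show "\<forall>g\<in>N - {f}. g \<inter> e = {}"
        proof
          fix g assume g: "g \<in> N - {f}"
          have "g \<inter> f = {}" using g fN mN(1) unfolding matching_def by blast
          thus "g \<inter> e = {}" using g xN yf e by auto
        qed
        show "e \<notin> N - {f}" using eN by blast
      qed
      have fN': "finite N" using matching_finite[OF sg mN(1)] .
      have "card (N - {f}) = k - 1" using fN' fN mN(2) by simp
      moreover have "card N > 0" using fN' fN by (auto simp: card_gt_0_iff)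
      moreover have "k \<ge> 1" using calculation(2) mN(2) by simp
      moreover have "finite (N - {f})" using fN' by simp
      moreover have "e \<notin> N - {f}" using eN by blast
      ultimately have cN': "card N' = k" unfolding N'_def by simp
      have "w \<noteq> y" using yN mN(3) by metis
      hence "w \<notin> e" using xw e(1) by simp
      moreover have "w \<notin> \<Union>(N - {f})" using mN(3) by blast
      ultimately have wN': "w \<notin> \<Union>N'" unfolding N'_def by simp
      have "P N'" unfolding P_def using mN' cN' wN' by blast
      hence le: "card (M \<inter> N') \<le> card (M \<inter> N)" using Nmax by blast
      have "M \<inter> N' = insert e (M \<inter> N)" unfolding N'_def using eM fM' by auto
      moreover have "finite (M \<inter> N)" using fN' by simp
      ultimately have "card (M \<inter> N') = Suc (card (M \<inter> N))" using eN by simp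
      thus False using le by simp
    qed
  qed
qed


definition cadj :: "'a set \<Rightarrow> 'a set set \<Rightarrow> 'a set \<Rightarrow> 'a \<Rightarrow> 'a \<Rightarrow> bool" where
  "cadj V E X = (\<lambda>u v. u \<in> V - X \<and> v \<in> V - X \<and> {u,v} \<in> E)"

definition ccls :: "'a set \<Rightarrow> 'a set set \<Rightarrow> 'a set \<Rightarrow> 'a \<Rightarrow> 'a set" where
  "ccls V E X v = {u \<in> V - X. (cadj V E X)\<^sup>*\<^sup>* v u}"

lemma comps_eq: "components_minus V E X = ccls V E X ` (V - X)"
  unfolding components_minus_def Let_def cadj_def ccls_def by simp

lemma cadj_sym: "cadj V E X u v \<Longrightarrow> cadj V E X v u"
  unfolding cadj_def by (simp add: insert_commute)

lemma cR_sym: "(cadj V E X)\<^sup>*\<^sup>* u v \<Longrightarrow> (cadj V E X)\<^sup>*\<^sup>* v u"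
proof (induction rule: rtranclp_induct)
  case base
  then show ?case by simp
next
  case (step y z)
  have "(cadj V E X)\<^sup>*\<^sup>* z y" using cadj_sym[OF step(2)] by simp
  then show ?case using step(3) by (rule rtranclp_trans)
qed

lemma ccls_self: "v \<in> V - X \<Longrightarrow> v \<in> ccls V E X v"
  unfolding ccls_def by simp

lemma ccls_sub: "ccls V E X v \<subseteq> V - X"
  unfolding ccls_def by auto

lemma ccls_eq: assumes "u \<in> ccls V E X v" shows "ccls V E X u = ccls V E X v"
proof -
  have R: "(cadj V E X)\<^sup>*\<^sup>* v u" using assms unfolding ccls_def by simp
  have "(cadj V E X)\<^sup>*\<^sup>* u w \<longleftrightarrow> (cadj V E X)\<^sup>*\<^sup>* v w" for w
    using rtranclp_trans[OF R, of w] rtranclp_trans[OF cR_sym[OF R], of w] by blast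
  thus ?thesis unfolding ccls_def by simp
qed

lemma ccls_rel: assumes "u \<in> ccls V E X v" "w \<in> ccls V E X v" shows "(cadj V E X)\<^sup>*\<^sup>* u w"
proof -
  have "(cadj V E X)\<^sup>*\<^sup>* v u" "(cadj V E X)\<^sup>*\<^sup>* v w" using assms unfolding ccls_def by auto
  thus ?thesis using cR_sym rtranclp_trans by fast
qed

lemma ccls_edge: assumes "{a,b} \<in> E" "a \<in> V - X" "b \<in> V - X"
  shows "b \<in> ccls V E X a"
proof -
  have "cadj V E X a b" unfolding cadj_def using assms by simp
  thus ?thesis unfolding ccls_def using assms by simp
qed

lemma ccls_disj: assumes "C \<in> components_minus V E X" "C' \<in> components_minus V E X" "C \<inter> C' \<noteq> {}"
  shows "C = C'"
proof -
  obtain v where "C = ccls V E X v" using assms(1) unfolding comps_eq by blast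
  moreover obtain v' where "C' = ccls V E X v'" using assms(2) unfolding comps_eq by blast
  moreover obtain z where "z \<in> C" "z \<in> C'" using assms(3) by blast
  ultimately show ?thesis using ccls_eq[of z V E X v] ccls_eq[of z V E X v'] by simp
qed

lemma comps_union: "\<Union>(components_minus V E X) = V - X"
proof -
  have "\<Union>(ccls V E X ` (V - X)) \<subseteq> V - X" using ccls_sub[of V E X] by (simp add: UN_least)
  moreover have "V - X \<subseteq> \<Union>(ccls V E X ` (V - X))"
  proof
    fix v assume v: "v \<in> V - X"
    hence "v \<in> ccls V E X v" by (rule ccls_self)
    thus "v \<in> \<Union>(ccls V E X ` (V - X))" using v by (rule UN_I[rotated])
  qed
  ultimately show ?thesis unfolding comps_eq by (rule equalityI)
qed

lemma comps_finite: "finite V \<Longrightarrow> finite (components_minus V E X)"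
  unfolding comps_eq by simp

lemma comps_elem_finite: "finite V \<Longrightarrow> C \<in> components_minus V E X \<Longrightarrow> finite C"
proof -
  assume a: "finite V" "C \<in> components_minus V E X"
  have "C \<subseteq> \<Union>(components_minus V E X)" using a(2) by (rule Union_upper)
  hence "C \<subseteq> V" unfolding comps_union by auto
  thus "finite C" using a(1) by (rule finite_subset)
qed

lemma comps_nonempty: "C \<in> components_minus V E X \<Longrightarrow> C \<noteq> {}"
  unfolding comps_eq using ccls_self by fastforce

lemma comps_card_sum: "finite V \<Longrightarrow> card (V - X) = (\<Sum>C\<in>components_minus V E X. card C)"
proof -
  assume fV: "finite V"
  have "card (\<Union>(components_minus V E X)) = (\<Sum>C\<in>components_minus V E X. card C)"
  proof (rule card_Union_disjoint)
    show "pairwise disjnt (components_minus V E X)"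
      unfolding pairwise_def disjnt_def using ccls_disj by blast
    show "\<And>A. A \<in> components_minus V E X \<Longrightarrow> finite A" using comps_elem_finite fV by blast
  qed
  thus ?thesis unfolding comps_union .
qed

lemma comp_matching_bound:
  fixes V :: "'a set" and E
  assumes sg: "simple_graph V E"
    and kmax: "\<forall>M. matching E M \<longrightarrow> card M \<le> k"
    and ess: "\<forall>v\<in>V. \<exists>M. matching E M \<and> card M = k \<and> v \<notin> \<Union>M"
    and M0: "matching E M0" "card M0 = k"
  shows "(\<Sum>C\<in>components_minus V E {}. card C div 2) \<le> k"
proof -
  have fV: "finite V" using sg unfolding simple_graph_def by simp
  define f where "f = (\<lambda>C. {e\<in>M0. e \<subseteq> C})"
  have fM0: "finite M0" using matching_finite[OF sg M0(1)] .
  have A_eq: "cadj V E {} = (\<lambda>u v. u \<in> V \<and> v \<in> V \<and> {u,v} \<in> E)" unfolding cadj_def by simp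
  have each: "card C div 2 \<le> card (f C)" if C: "C \<in> components_minus V E {}" for C
  proof -
    obtain v where v: "v \<in> V" and Cv: "C = ccls V E {} v" using C unfolding comps_eq by auto
    have fC: "finite C" using comps_elem_finite[OF fV C] .
    have mf: "matching E (f C)" using M0(1) unfolding matching_def f_def by auto
    have cov: "C \<inter> \<Union>M0 = \<Union>(f C)"
    proof
      show "\<Union>(f C) \<subseteq> C \<inter> \<Union>M0" unfolding f_def by auto
      show "C \<inter> \<Union>M0 \<subseteq> \<Union>(f C)"
      proof
        fix z assume z: "z \<in> C \<inter> \<Union>M0"
        then obtain e where e: "e \<in> M0" "z \<in> e" by blast
        have eE: "e \<in> E" using e(1) M0(1) unfolding matching_def by auto
        obtain y where y: "e = {z,y}" "z \<noteq> y" "z \<in> V" "y \<in> V" using sg_edge_other[OF sg eE e(2)] by blast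
        have "y \<in> ccls V E {} z" using ccls_edge[of z y E V "{}"] y eE by simp
        moreover have "ccls V E {} z = C" using ccls_eq[of z V E "{}" v] z Cv by simp
        ultimately have "e \<subseteq> C" using y(1) z by auto
        thus "z \<in> \<Union>(f C)" using e unfolding f_def by auto
      qed
    qed
    have c1: "card (C \<inter> \<Union>M0) = 2 * card (f C)" unfolding cov by (rule matching_cover_card[OF sg mf])
    have c2: "card (C - \<Union>M0) \<le> 1"
    proof -
      have "a = b" if a: "a \<in> C - \<Union>M0" and b: "b \<in> C - \<Union>M0" for a b
      proof (rule ccontr)
        assume ab: "a \<noteq> b"
        have "(cadj V E {})\<^sup>*\<^sup>* a b" using ccls_rel[of a V E "{}" v b] a b Cv by simp
        then obtain n where "((cadj V E {}) ^^ n) a b" by (blast dest: rtranclp_imp_relpowp)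
        hence rel: "((\<lambda>u v. u \<in> V \<and> v \<in> V \<and> {u,v} \<in> E) ^^ n) a b" unfolding A_eq .
        have "a \<notin> \<Union>M0" "b \<notin> \<Union>M0" using a b by auto
        thus False using gallai[OF sg kmax ess M0(1) M0(2) _ _ ab rel] by blast
      qed
      thus ?thesis using fC card_le_Suc0_iff_eq[of "C - \<Union>M0"] by simp
    qed
    have "card C = card (C \<inter> \<Union>M0) + card (C - \<Union>M0)"
      using fC by (rule card_Int_Diff)
    thus ?thesis using c1 c2 by linarith
  qed
  have "(\<Sum>C\<in>components_minus V E {}. card C div 2) \<le> (\<Sum>C\<in>components_minus V E {}. card (f C))"
    using each by (rule sum_mono)
  also have "\<dots> = card (\<Union>C\<in>components_minus V E {}. f C)"
  proof (rule card_UN_disjoint[symmetric])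
    show "finite (components_minus V E {})" using comps_finite[OF fV] .
    show "\<forall>C\<in>components_minus V E {}. finite (f C)" using fM0 unfolding f_def by simp
    show "\<forall>C\<in>components_minus V E {}. \<forall>C'\<in>components_minus V E {}. C \<noteq> C' \<longrightarrow> f C \<inter> f C' = {}"
    proof (intro ballI impI)
      fix C C' assume C: "C \<in> components_minus V E {}" and C': "C' \<in> components_minus V E {}" and ne: "C \<noteq> C'"
      show "f C \<inter> f C' = {}"
      proof (rule ccontr)
        assume "f C \<inter> f C' \<noteq> {}"
        then obtain e where e: "e \<in> M0" "e \<subseteq> C" "e \<subseteq> C'" unfolding f_def by auto
        have "e \<in> E" using e(1) M0(1) unfolding matching_def by auto
        hence "card e = 2" using sg_card2[OF sg] by simp
        hence "e \<noteq> {}" by auto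
        hence "C \<inter> C' \<noteq> {}" using e by blast
        thus False using ccls_disj[OF C C'] ne by simp
      qed
    qed
  qed
  also have "\<dots> \<le> card M0" using fM0 unfolding f_def by (intro card_mono) auto
  finally show ?thesis using M0(2) by simp
qed

lemma berge:
  fixes V :: "'a set"
  assumes "simple_graph V E" "\<not> contains_matching E (s + 1)"
  shows "\<exists>X. admissible V E s X"
  using assms
proof (induction "card V" arbitrary: V E s rule: less_induct)
  case less
  have sg: "simple_graph V E" by (rule less.prems(1))
  have fV: "finite V" using sg unfolding simple_graph_def by simp
  have fE: "finite E" by (rule sg_finite_E[OF sg])
  define MS where "MS = {card M | M. matching E M}"
  have "MS \<subseteq> {0..card E}"
  proof
    fix c assume "c \<in> MS"
    then obtain M where "c = card M" "matching E M" unfolding MS_def by blast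
    hence "c \<le> card E" using fE unfolding matching_def by (simp add: card_mono)
    thus "c \<in> {0..card E}" by simp
  qed
  hence fMS: "finite MS" by (rule finite_subset) simp
  have "matching E {}" unfolding matching_def by simp
  hence "0 \<in> MS" unfolding MS_def by force
  hence MSne: "MS \<noteq> {}" by blast
  define k where "k = Max MS"
  have kmax: "\<forall>M. matching E M \<longrightarrow> card M \<le> k"
  proof (intro allI impI)
    fix M assume "matching E M"
    hence "card M \<in> MS" unfolding MS_def by blast
    thus "card M \<le> k" unfolding k_def using fMS by simp
  qed
  have "k \<in> MS" unfolding k_def using fMS MSne by (rule Max_in)
  then obtain M0 where M0: "matching E M0" "card M0 = k" unfolding MS_def by blast
  have ks: "k \<le> s"
  proof (rule ccontr)
    assume "\<not> k \<le> s"
    hence "contains_matching E (s + 1)" using contains_matchingI[OF sg M0(1)] M0(2) by simp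
    thus False using less.prems(2) by simp
  qed
  show ?case
  proof (cases "\<exists>v\<in>V. \<forall>M. matching E M \<and> card M = k \<longrightarrow> v \<in> \<Union>M")
    case True
    then obtain v where v: "v \<in> V" and vall: "\<forall>M. matching E M \<and> card M = k \<longrightarrow> v \<in> \<Union>M" by blast
    have "k \<noteq> 0"
    proof
      assume "k = 0"
      hence "v \<in> \<Union>{}" using vall \<open>matching E {}\<close> by (metis card.empty)
      thus False by simp
    qed
    then obtain s' where ks': "k = Suc s'" using not0_implies_Suc by blast
    define V' where "V' = V - {v}"
    define E' where "E' = {e \<in> E. v \<notin> e}"
    have sg': "simple_graph V' E'"
      unfolding simple_graph_def
    proof (intro conjI ballI)
      show "finite V'" unfolding V'_def using fV by simp
      fix e assume e: "e \<in> E'"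
      hence eE: "e \<in> E" and ve: "v \<notin> e" unfolding E'_def by auto
      obtain a b where ab: "e = {a,b}" "a \<noteq> b" "a \<in> V" "b \<in> V" using sg_edge[OF sg eE] by blast
      have "a \<in> V'" "b \<in> V'" unfolding V'_def using ab ve by auto
      thus "\<exists>a b. e = {a, b} \<and> a \<noteq> b \<and> a \<in> V' \<and> b \<in> V'" using ab by blast
    qed
    have lt: "card V' < card V" unfolding V'_def using fV v by (rule card_Diff1_less)
    have nm: "\<not> contains_matching E' (s' + 1)"
    proof
      assume "contains_matching E' (s' + 1)"
      then obtain M where M: "matching E' M" "card M = k" using contains_matchingD ks' by fastforce
      have "matching E M" using M(1) unfolding matching_def E'_def by auto
      hence "v \<in> \<Union>M" using vall M(2) by blast
      moreover have "v \<notin> \<Union>M" using M(1) unfolding matching_def E'_def by auto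
      ultimately show False by blast
    qed
    obtain X' where X': "admissible V' E' s' X'" using less.hyps[OF lt sg' nm] by blast
    define X where "X = insert v X'"
    have X'V: "X' \<subseteq> V'" using X' unfolding admissible_def by simp
    have vX': "v \<notin> X'" using X'V unfolding V'_def by auto
    have fX': "finite X'" using X'V sg' unfolding simple_graph_def using finite_subset by auto
    have cX: "card X = Suc (card X')" unfolding X_def using fX' vX' by simp
    have W: "V' - X' = V - X" unfolding V'_def X_def by auto
    have adj: "cadj V' E' X' = cadj V E X"
    proof (intro ext)
      fix a b
      show "cadj V' E' X' a b = cadj V E X a b"
        unfolding cadj_def W unfolding E'_def X_def by auto
    qed
    have ccls_e: "ccls V' E' X' = ccls V E X" unfolding ccls_def adj W ..
    have comps: "components_minus V' E' X' = components_minus V E X"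
      unfolding comps_eq ccls_e W ..
    have "admissible V E s X"
      unfolding admissible_def
    proof
      show "X \<subseteq> V" unfolding X_def using X'V v unfolding V'_def by auto
      have "card X' + (\<Sum>C\<in>components_minus V' E' X'. card C div 2) \<le> s'"
        using X' unfolding admissible_def by simp
      thus "card X + (\<Sum>C\<in>components_minus V E X. card C div 2) \<le> s"
        unfolding cX comps[symmetric] using ks ks' by simp
    qed
    thus ?thesis by blast
  next
    case False
    hence ess: "\<forall>v\<in>V. \<exists>M. matching E M \<and> card M = k \<and> v \<notin> \<Union>M" by blast
    have "(\<Sum>C\<in>components_minus V E {}. card C div 2) \<le> k"
      by (rule comp_matching_bound[OF sg kmax ess M0])
    hence "admissible V E s {}" unfolding admissible_def using ks by simp
    thus ?thesis by blast
  qed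
qed

lemma Klt_pull:
  assumes inj: "inj_on \<psi> (A \<union> B)" and dj: "A \<inter> B = {}" and cA: "card A = l" and cB: "card B = t"
    and sub: "\<psi> ` (A \<union> B) \<subseteq> V" and ed: "\<forall>a\<in>A. \<forall>b\<in>B. {\<psi> a, \<psi> b} \<in> E"
  shows "contains_Klt V E l t"
proof -
  have iA: "inj_on \<psi> A" using inj by (rule inj_on_subset) simp
  have iB: "inj_on \<psi> B" using inj by (rule inj_on_subset) simp
  have "\<psi> ` A \<inter> \<psi> ` B = \<psi> ` (A \<inter> B)" using inj_on_image_Int[OF inj, of A B] by simp
  hence d: "\<psi> ` A \<inter> \<psi> ` B = {}" using dj by simp
  have "card (\<psi> ` A) = l" using card_image[OF iA] cA by simp
  moreover have "card (\<psi> ` B) = t" using card_image[OF iB] cB by simp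
  moreover have "\<psi> ` A \<subseteq> V" "\<psi> ` B \<subseteq> V" using sub by auto
  moreover have "\<forall>a\<in>\<psi> ` A. \<forall>b\<in>\<psi> ` B. {a, b} \<in> E" using ed by blast
  ultimately show ?thesis unfolding contains_Klt_def using d by blast
qed

lemma sg_card_le_choose: assumes "simple_graph U F" shows "card F \<le> card U choose 2"
proof -
  have fU: "finite U" using assms unfolding simple_graph_def by simp
  have "F \<subseteq> {S. S \<subseteq> U \<and> card S = 2}" using sg_sub[OF assms] sg_card2[OF assms] by blast
  hence "card F \<le> card {S. S \<subseteq> U \<and> card S = 2}" using fU by (intro card_mono) auto
  thus ?thesis using n_subsets[OF fU, of 2] by simp
qed

lemma ex_Klt_ge:
  assumes sg: "simple_graph U F" and nK: "\<not> contains_Klt U F l t" and cU: "card U \<le> m"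
    and l1: "l \<ge> 1" and t1: "t \<ge> 1"
  shows "card F \<le> ex_Klt m l t"
proof -
  have fU: "finite U" using sg unfolding simple_graph_def by simp
  obtain h where bh: "bij_betw h U {0..<card U}" using ex_bij_betw_finite_nat[OF fU] by blast
  have ih: "inj_on h U" using bh by (simp add: bij_betw_def)
  have hU: "h ` U \<subseteq> {0..<m}" using bh cU unfolding bij_betw_def by auto
  define F' where "F' = (\<lambda>e. h ` e) ` F"
  have UF: "\<Union>F \<subseteq> U" using sg_sub[OF sg] by blast
  have iF: "inj_on (\<lambda>e. h ` e) F" using inj_on_image[OF inj_on_subset[OF ih UF]] .
  have cF: "card F' = card F" unfolding F'_def using card_image[OF iF] .
  have sg': "simple_graph {0..<m} F'"
    unfolding simple_graph_def
  proof (intro conjI ballI)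
    show "finite {0..<m}" by simp
    fix e' assume "e' \<in> F'"
    then obtain e where e: "e \<in> F" "e' = h ` e" unfolding F'_def by blast
    obtain a b where ab: "e = {a,b}" "a \<noteq> b" "a \<in> U" "b \<in> U" using sg_edge[OF sg e(1)] by blast
    have "h a \<noteq> h b" using ab ih unfolding inj_on_def by blast
    moreover have "h a \<in> {0..<m}" "h b \<in> {0..<m}" using hU ab by auto
    ultimately show "\<exists>a b. e' = {a, b} \<and> a \<noteq> b \<and> a \<in> {0..<m} \<and> b \<in> {0..<m}"
      using e(2) ab(1) by (intro exI[of _ "h a"] exI[of _ "h b"]) simp
  qed
  have nK': "\<not> contains_Klt {0..<m} F' l t"
  proof
    assume "contains_Klt {0..<m} F' l t"
    then obtain A B where AB: "A \<inter> B = {}" "card A = l" "card B = t" "\<forall>a\<in>A. \<forall>b\<in>B. {a, b} \<in> F'"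
      unfolding contains_Klt_def by blast
    define \<psi> where "\<psi> = the_inv_into U h"
    have Ane: "A \<noteq> {}" using AB(2) l1 by auto
    have Bne: "B \<noteq> {}" using AB(3) t1 by auto
    have edge: "\<exists>e\<in>F. h ` e = {a,b}" if "a \<in> A" "b \<in> B" for a b
    proof -
      have "{a,b} \<in> (\<lambda>e. h ` e) ` F" using AB(4) that unfolding F'_def by blast
      then obtain e where "e \<in> F" "{a,b} = h ` e" by (rule imageE)
      thus ?thesis by auto
    qed
    have inU0: "a \<in> h ` U" if "e \<in> F" "h ` e = {a,b}" for a b e
    proof -
      have "a \<in> h ` e" using that(2) by simp
      moreover have "h ` e \<subseteq> h ` U" using sg_sub[OF sg that(1)] by (rule image_mono)
      ultimately show ?thesis by (rule subsetD[rotated])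
    qed
    have inU: "a \<in> h ` U" if "a \<in> A \<union> B" for a
    proof -
      { assume aA: "a \<in> A"
        obtain b where "b \<in> B" using Bne by blast
        then obtain e where "e \<in> F" "h ` e = {a,b}" using edge aA by blast
        hence "a \<in> h ` U" by (rule inU0) }
      moreover
      { assume aB: "a \<in> B"
        obtain b where "b \<in> A" using Ane by blast
        then obtain e where "e \<in> F" "h ` e = {b,a}" using edge aB by blast
        hence "h ` e = {a,b}" by (simp add: insert_commute)
        hence "a \<in> h ` U" using \<open>e \<in> F\<close> inU0 by blast }
      ultimately show ?thesis using that by blast
    qed
    hence ABU: "A \<union> B \<subseteq> h ` U" by blast
    have inj\<psi>: "inj_on \<psi> (A \<union> B)" unfolding \<psi>_def using inj_on_the_inv_into[OF ih] ABU by (rule inj_on_subset)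
    have sub\<psi>: "\<psi> ` (A \<union> B) \<subseteq> U"
    proof (rule image_subsetI)
      fix a assume "a \<in> A \<union> B"
      hence "a \<in> h ` U" by (rule subsetD[OF ABU])
      thus "\<psi> a \<in> U" unfolding \<psi>_def by (rule the_inv_into_into[OF ih _ subset_refl])
    qed
    have ed\<psi>: "\<forall>a\<in>A. \<forall>b\<in>B. {\<psi> a, \<psi> b} \<in> F"
    proof (intro ballI)
      fix a b assume a: "a \<in> A" and b: "b \<in> B"
      obtain e where e: "e \<in> F" "h ` e = {a,b}" using edge a b by blast
      have eU: "e \<subseteq> U" using sg_sub[OF sg e(1)] .
      have "(\<lambda>x. \<psi> (h x)) ` e = (\<lambda>x. x) ` e"
      proof (rule image_cong)
        fix x assume "x \<in> e"
        thus "\<psi> (h x) = x" unfolding \<psi>_def using eU by (intro the_inv_into_f_f[OF ih]) blast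
      qed simp
      hence "\<psi> ` (h ` e) = e" by (simp add: image_image)
      hence "{\<psi> a, \<psi> b} = e" using e(2) by simp
      thus "{\<psi> a, \<psi> b} \<in> F" using e(1) by simp
    qed
    have "contains_Klt U F l t" using Klt_pull[OF inj\<psi> AB(1) AB(2) AB(3) sub\<psi> ed\<psi>] .
    thus False using nK by simp
  qed
  define S where "S = {card E | E. simple_graph {0..<m} E \<and> \<not> contains_Klt {0..<m} E l t}"
  have "card F' \<in> S" unfolding S_def using sg' nK' by blast
  moreover have "finite S"
  proof (rule finite_subset)
    show "S \<subseteq> {0..card (Pow {0..<m::nat})}"
    proof
      fix c assume "c \<in> S"
      then obtain E where E: "c = card E" "simple_graph {0..<m} E" unfolding S_def by blast
      have "E \<subseteq> Pow {0..<m}" using sg_sub[OF E(2)] by blast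
      hence "card E \<le> card (Pow {0..<m})" by (intro card_mono) auto
      thus "c \<in> {0..card (Pow {0..<m::nat})}" using E(1) by simp
    qed
  qed simp
  ultimately have "card F' \<le> Max S" by simp
  thus ?thesis using cF unfolding ex_Klt_def S_def by simp
qed

lemma EX_bound:
  assumes sg: "simple_graph V E" and XV: "X \<subseteq> V"
  shows "card {e\<in>E. e \<inter> X \<noteq> {}} \<le> (card X choose 2) + card X * (card V - card X)"
proof -
  have fV: "finite V" using sg unfolding simple_graph_def by simp
  have fX: "finite X" using fV XV by (rule finite_subset[rotated])
  have "{e\<in>E. e \<inter> X \<noteq> {}} \<subseteq> {S. S \<subseteq> X \<and> card S = 2} \<union> (\<lambda>(a,b). {a,b}) ` (X \<times> (V - X))"
  proof
    fix e assume e: "e \<in> {e\<in>E. e \<inter> X \<noteq> {}}"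
    then obtain z where z: "z \<in> e" "z \<in> X" by blast
    have eE: "e \<in> E" using e by simp
    obtain y where y: "e = {z,y}" "z \<noteq> y" "y \<in> V" using sg_edge_other[OF sg eE z(1)] by blast
    show "e \<in> {S. S \<subseteq> X \<and> card S = 2} \<union> (\<lambda>(a,b). {a,b}) ` (X \<times> (V - X))"
    proof (cases "y \<in> X")
      case True
      then show ?thesis using y z by simp
    next
      case False
      hence "(z,y) \<in> X \<times> (V - X)" using z y by simp
      hence "e \<in> (\<lambda>(a,b). {a,b}) ` (X \<times> (V - X))" using y(1) by force
      thus ?thesis by blast
    qed
  qed
  hence "card {e\<in>E. e \<inter> X \<noteq> {}} \<le> card ({S. S \<subseteq> X \<and> card S = 2} \<union> (\<lambda>(a,b). {a,b}) ` (X \<times> (V - X)))"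
    using fX fV by (intro card_mono) auto
  also have "\<dots> \<le> card {S. S \<subseteq> X \<and> card S = 2} + card ((\<lambda>(a,b). {a,b}) ` (X \<times> (V - X)))"
    by (rule card_Un_le)
  also have "card ((\<lambda>(a,b). {a,b}) ` (X \<times> (V - X))) \<le> card (X \<times> (V - X))"
    by (rule card_image_le) (use fX fV in simp)
  also have "card (X \<times> (V - X)) = card X * (card V - card X)"
    using fX fV XV by (simp add: card_cartesian_product card_Diff_subset)
  finally show ?thesis using n_subsets[OF fX, of 2] by simp
qed

lemma two_set_eq: assumes "card e = 2" "p \<in> e" "d \<in> e" "p \<noteq> d" shows "e = {p,d}"
proof -
  obtain x y where xy: "e = {x,y}" "x \<noteq> y" using assms(1) card_2_iff by metis
  show ?thesis using assms(2-4) xy by auto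
qed

lemma glue:
  fixes V :: "'a set"
  assumes sg: "simple_graph V E" and nK: "\<not> contains_Klt V E l t" and l2: "l \<ge> 2" and t2: "t \<ge> 2"
  shows "\<exists>(U::'a set) F. simple_graph U F \<and> \<not> contains_Klt U F l t \<and>
     card U \<le> 2 * (\<Sum>C\<in>components_minus V E X. card C div 2) + 1 \<and>
     card F = card {e\<in>E. e \<subseteq> V - X}"
proof (cases "V - X = {}")
  case True
  have "{e\<in>E. e \<subseteq> V - X} = {}"
  proof (rule ccontr)
    assume "{e\<in>E. e \<subseteq> V - X} \<noteq> {}"
    then obtain e where "e \<in> E" "e \<subseteq> V - X" by blast
    hence c: "card e = 2" using sg_card2[OF sg] by simp
    have "e = {}" using \<open>e \<subseteq> V - X\<close> True by blast
    thus False using c by simp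
  qed
  moreover have "simple_graph ({}::'a set) {}" unfolding simple_graph_def by simp
  moreover have "\<not> contains_Klt ({}::'a set) {} l t" unfolding contains_Klt_def using l2 by auto
  ultimately show ?thesis by (intro exI[of _ "{}::'a set"] exI[of _ "{}::'a set set"]) (simp only: card.empty, simp)
next
  case False
  define W where "W = V - X"
  define cl where "cl = ccls V E X"
  define comps where "comps = components_minus V E X"
  define EW where "EW = {e\<in>E. e \<subseteq> V - X}"
  have fV: "finite V" using sg unfolding simple_graph_def by simp
  have fW: "finite W" unfolding W_def using fV by simp
  obtain v0 where v0: "v0 \<in> W" using False unfolding W_def by blast
  define rep where "rep = (\<lambda>v. SOME u. u \<in> cl v)"
  have clW: "cl v \<subseteq> W" for v unfolding cl_def W_def by (rule ccls_sub)
  have self: "v \<in> cl v" if "v \<in> W" for v unfolding cl_def using that unfolding W_def by (rule ccls_self)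
  have cleq: "cl u = cl v" if "u \<in> cl v" for u v unfolding cl_def using that unfolding cl_def by (rule ccls_eq)
  have rep_in: "rep v \<in> cl v" if "v \<in> W" for v
    unfolding rep_def using self[OF that] by (rule someI)
  have rep_cong: "rep u = rep v" if "cl u = cl v" for u v unfolding rep_def using that by simp
  have rep_rep: "rep (rep v) = rep v" if "v \<in> W" for v
    using rep_cong[OF cleq[OF rep_in[OF that]]] .
  define r0 where "r0 = rep v0"
  have r0W: "r0 \<in> W" unfolding r0_def using rep_in[OF v0] clW by blast
  have r0r: "rep r0 = r0" unfolding r0_def using rep_rep[OF v0] .
  define \<phi> where "\<phi> = (\<lambda>v. if rep v = v then r0 else v)"
  have F1: "\<phi> v = r0 \<longleftrightarrow> rep v = v" for v
    unfolding \<phi>_def using r0r by auto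
  have F2: "rep v \<noteq> v \<Longrightarrow> \<phi> v = v" for v unfolding \<phi>_def by simp
  have F3: "u = v" if "cl u = cl v" "\<phi> u = \<phi> v" for u v
  proof -
    have ru: "rep u = rep v" using rep_cong[OF that(1)] .
    show ?thesis
    proof (cases "rep u = u")
      case True
      have "\<phi> u = r0" using F1[of u] True by simp
      hence "\<phi> v = r0" using that(2) by simp
      hence "rep v = v" using F1[of v] by simp
      thus ?thesis using True ru by simp
    next
      case False
      hence "\<phi> u \<noteq> r0" using F1[of u] by simp
      hence "\<phi> v \<noteq> r0" using that(2) by simp
      hence "rep v \<noteq> v" using F1[of v] by simp
      thus ?thesis using that(2) False F2 by simp
    qed
  qed
  have edge_cl: "b \<in> cl a" if "{a,b} \<in> E" "a \<in> W" "b \<in> W" for a b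
    unfolding cl_def using ccls_edge[of a b E V X] that unfolding W_def by simp
  have F4: "\<exists>p\<in>e. rep p \<noteq> p \<and> e \<subseteq> cl p" if e: "e \<in> EW" for e
  proof -
    have eE: "e \<in> E" and eW: "e \<subseteq> W" using e unfolding EW_def W_def by auto
    obtain a b where ab: "e = {a,b}" "a \<noteq> b" using sg_edge[OF sg eE] by blast
    have aW: "a \<in> W" "b \<in> W" using eW ab by auto
    have bcl: "b \<in> cl a" using edge_cl eE ab aW by simp
    have clab: "cl b = cl a" using cleq[OF bcl] .
    have sub: "e \<subseteq> cl a" using ab self[OF aW(1)] bcl by simp
    show ?thesis
    proof (cases "rep a = a")
      case True
      have "rep b = a" using rep_cong[OF clab] True by simp
      hence "rep b \<noteq> b" using ab(2) by simp
      thus ?thesis using sub clab ab by auto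
    next
      case False
      thus ?thesis using sub ab by auto
    qed
  qed
  define U where "U = \<phi> ` W"
  define F where "F = (\<lambda>e. \<phi> ` e) ` EW"
  have fU: "finite U" unfolding U_def using fW by simp
  have inj_cl: "inj_on \<phi> (cl p)" for p
  proof (rule inj_onI)
    fix u v assume "u \<in> cl p" "v \<in> cl p" "\<phi> u = \<phi> v"
    thus "u = v" using F3 cleq by metis
  qed
  have sgU: "simple_graph U F"
    unfolding simple_graph_def
  proof (intro conjI ballI)
    show "finite U" by (rule fU)
    fix e' assume "e' \<in> F"
    then obtain e where e: "e \<in> EW" "e' = \<phi> ` e" unfolding F_def by blast
    have eE: "e \<in> E" and eW: "e \<subseteq> W" using e unfolding EW_def W_def by auto
    obtain a b where ab: "e = {a,b}" "a \<noteq> b" using sg_edge[OF sg eE] by blast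
    have aW: "a \<in> W" "b \<in> W" using eW ab by auto
    have "cl b = cl a" using cleq edge_cl eE ab aW by simp
    hence "\<phi> a \<noteq> \<phi> b" using F3 ab(2) by metis
    moreover have "\<phi> a \<in> U" "\<phi> b \<in> U" unfolding U_def using aW by auto
    ultimately show "\<exists>a b. e' = {a, b} \<and> a \<noteq> b \<and> a \<in> U \<and> b \<in> U"
      using e(2) ab(1) by (intro exI[of _ "\<phi> a"] exI[of _ "\<phi> b"]) simp
  qed
  have nonr0: "p \<in> W \<and> rep p \<noteq> p \<and> \<phi> p = p" if pU: "p \<in> U" and pr: "p \<noteq> r0" for p
  proof -
    obtain v where v: "v \<in> W" "p = \<phi> v" using pU unfolding U_def by blast
    hence "rep v \<noteq> v" using pr F1[of v] by simp
    hence "\<phi> v = v" using F2 by simp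
    thus ?thesis using v \<open>rep v \<noteq> v\<close> by simp
  qed
  have pre_nonr0: "c = p" if "\<phi> c = p" "p \<noteq> r0" for c p
  proof -
    have "rep c \<noteq> c" using that F1 by auto
    thus ?thesis using that F2 by simp
  qed
  have cardF: "card F = card EW"
  proof -
    have "inj_on (\<lambda>e. \<phi> ` e) EW"
    proof (rule inj_onI)
      fix e1 e2 assume e1: "e1 \<in> EW" and e2: "e2 \<in> EW" and eq: "\<phi> ` e1 = \<phi> ` e2"
      obtain p where p: "p \<in> e1" "rep p \<noteq> p" "e1 \<subseteq> cl p" using F4[OF e1] by blast
      have pp: "\<phi> p = p" using F2 p(2) .
      have pr0: "p \<noteq> r0" using p(2) r0r by auto
      have "p \<in> \<phi> ` e2" using eq p(1) pp by (metis imageI)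
      then obtain c where c: "c \<in> e2" "\<phi> c = p" by blast
      have "c = p" using pre_nonr0[OF c(2) pr0] .
      hence pe2: "p \<in> e2" using c(1) by simp
      obtain q where q: "e2 \<subseteq> cl q" using F4[OF e2] by blast
      have "cl p = cl q" using cleq pe2 q by blast
      hence "e2 \<subseteq> cl p" using q by simp
      thus "e1 = e2" using inj_on_image_eq_iff[OF inj_cl p(3)] eq by blast
    qed
    thus ?thesis unfolding F_def by (rule card_image)
  qed
  define Rp where "Rp = {v\<in>W. rep v = v}"
  have cardU: "card U \<le> 2 * (\<Sum>C\<in>comps. card C div 2) + 1"
  proof -
    have "U \<subseteq> insert r0 (W - Rp)"
    proof
      fix p assume "p \<in> U"
      then obtain v where v: "v \<in> W" "p = \<phi> v" unfolding U_def by blast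
      show "p \<in> insert r0 (W - Rp)"
      proof (cases "rep v = v")
        case True
        thus ?thesis using v F1[of v] by simp
      next
        case False
        thus ?thesis using v F2[of v] unfolding Rp_def by simp
      qed
    qed
    hence "card U \<le> card (insert r0 (W - Rp))" using fW by (intro card_mono) auto
    also have "\<dots> \<le> Suc (card (W - Rp))" by (rule card_insert_le_m1) simp_all
    also have "card (W - Rp) = card W - card Rp" unfolding Rp_def using fW by (intro card_Diff_subset) auto
    also have "card Rp = card comps"
    proof -
      have "bij_betw cl Rp comps"
        unfolding bij_betw_def
      proof
        show "inj_on cl Rp"
        proof (rule inj_onI)
          fix a b assume "a \<in> Rp" "b \<in> Rp" "cl a = cl b"
          thus "a = b" using rep_cong[of a b] unfolding Rp_def by simp
        qed
        show "cl ` Rp = comps"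
        proof
          show "cl ` Rp \<subseteq> comps" unfolding Rp_def comps_def comps_eq cl_def W_def by auto
          show "comps \<subseteq> cl ` Rp"
          proof
            fix C assume "C \<in> comps"
            then obtain v where v: "v \<in> W" "C = cl v" unfolding comps_def comps_eq cl_def W_def by auto
            have "rep v \<in> W" using rep_in[OF v(1)] clW by blast
            moreover have "rep (rep v) = rep v" using rep_rep[OF v(1)] .
            moreover have "cl (rep v) = C" using cleq[OF rep_in[OF v(1)]] v(2) by simp
            ultimately show "C \<in> cl ` Rp" unfolding Rp_def by force
          qed
        qed
      qed
      thus ?thesis by (rule bij_betw_same_card)
    qed
    also have "card W = (\<Sum>C\<in>comps. card C)" unfolding W_def comps_def by (rule comps_card_sum[OF fV])
    also have "(\<Sum>C\<in>comps. card C) \<le> (\<Sum>C\<in>comps. 2 * (card C div 2) + 1)"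
      by (intro sum_mono) simp
    also have "\<dots> = 2 * (\<Sum>C\<in>comps. card C div 2) + card comps"
      by (simp only: sum.distrib sum_distrib_left[symmetric]) simp
    finally show ?thesis by simp
  qed
  have E1: "{p,q} \<in> E \<and> cl p = cl q" if pq: "{p,q} \<in> F" "p \<noteq> r0" "q \<noteq> r0" "p \<noteq> q" for p q
  proof -
    obtain e where e: "e \<in> EW" "{p,q} = \<phi> ` e" using pq(1) unfolding F_def by blast
    have eE: "e \<in> E" and eW: "e \<subseteq> W" using e unfolding EW_def W_def by auto
    have "p \<in> \<phi> ` e" using e(2) by blast
    then obtain c where c: "c \<in> e" "\<phi> c = p" by blast
    have pe: "p \<in> e" using pre_nonr0[OF c(2) pq(2)] c(1) by simp
    have "q \<in> \<phi> ` e" using e(2) by blast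
    then obtain d where d: "d \<in> e" "\<phi> d = q" by blast
    have qe: "q \<in> e" using pre_nonr0[OF d(2) pq(3)] d(1) by simp
    have "e = {p,q}" using two_set_eq[OF sg_card2[OF sg eE] pe qe pq(4)] .
    hence "{p,q} \<in> E" using eE by simp
    moreover have "q \<in> cl p" using edge_cl[OF \<open>{p,q} \<in> E\<close>] eW pe qe by blast
    ultimately show ?thesis using cleq[of q p] by simp
  qed
  have E2: "{p, rep p} \<in> E" if pq: "{p,r0} \<in> F" "p \<noteq> r0" for p
  proof -
    obtain e where e: "e \<in> EW" "{p,r0} = \<phi> ` e" using pq(1) unfolding F_def by blast
    have eE: "e \<in> E" and eW: "e \<subseteq> W" using e unfolding EW_def W_def by auto
    have "p \<in> \<phi> ` e" using e(2) by blast
    then obtain c where c: "c \<in> e" "\<phi> c = p" by blast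
    have pe: "p \<in> e" using pre_nonr0[OF c(2) pq(2)] c(1) by simp
    have pW: "p \<in> W" using pe eW by blast
    have "r0 \<in> \<phi> ` e" using e(2) by blast
    then obtain d where d: "d \<in> e" "\<phi> d = r0" by blast
    have rd: "rep d = d" using F1[of d] d(2) by simp
    have rp: "rep p \<noteq> p" using F1[of p] F2[of p] pq(2) c(2) pre_nonr0[OF c(2) pq(2)] by auto
    have dp: "d \<noteq> p" using rd rp by auto
    have "e = {p,d}" using two_set_eq[OF sg_card2[OF sg eE] pe d(1) dp[symmetric]] .
    hence "{p,d} \<in> E" using eE by simp
    hence "d \<in> cl p" using edge_cl eW pe d(1) by blast
    hence "rep d = rep p" using rep_cong[OF cleq[of d p]] by simp
    thus ?thesis using \<open>{p,d} \<in> E\<close> rd by simp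
  qed
  have nK': "\<not> contains_Klt U F l t"
  proof
    assume "contains_Klt U F l t"
    then obtain A B where AB: "A \<subseteq> U" "B \<subseteq> U" "A \<inter> B = {}" "card A = l" "card B = t"
      "\<forall>a\<in>A. \<forall>b\<in>B. {a, b} \<in> F" unfolding contains_Klt_def by blast
    have fA: "finite A" using AB(4) l2 card.infinite by fastforce
    have fB: "finite B" using AB(5) t2 card.infinite by fastforce
    have "A - {r0} \<noteq> {}"
    proof
      assume "A - {r0} = {}"
      hence "A \<subseteq> {r0}" by blast
      hence "card A \<le> card {r0}" by (intro card_mono) simp_all
      thus False using AB(4) l2 by simp
    qed
    then obtain a1 where a1: "a1 \<in> A" "a1 \<noteq> r0" by blast
    have "B - {r0} \<noteq> {}"
    proof
      assume "B - {r0} = {}"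
      hence "B \<subseteq> {r0}" by blast
      hence "card B \<le> card {r0}" by (intro card_mono) simp_all
      thus False using AB(5) t2 by simp
    qed
    then obtain b1 where b1: "b1 \<in> B" "b1 \<noteq> r0" by blast
    have neq: "a \<noteq> b" if "a \<in> A" "b \<in> B" for a b using AB(3) that by blast
    have same: "cl p = cl b1" if p: "p \<in> A \<union> B" "p \<noteq> r0" for p
    proof (cases "p \<in> A")
      case True
      thus ?thesis using E1[of p b1] AB(6) b1 p(2) neq by blast
    next
      case False
      hence pB: "p \<in> B" using p(1) by blast
      have "cl a1 = cl p" using E1[of a1 p] AB(6) a1 pB p(2) neq by blast
      moreover have "cl a1 = cl b1" using E1[of a1 b1] AB(6) a1 b1 neq by blast
      ultimately show ?thesis by simp
    qed
    have b1W: "b1 \<in> W" using nonr0[of b1] AB(2) b1 by blast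
    define \<psi> where "\<psi> = (\<lambda>z. if z = r0 then rep b1 else z)"
    have nrep: "rep p \<noteq> p" if "p \<in> A \<union> B" "p \<noteq> r0" for p
      using nonr0[of p] AB(1,2) that by blast
    have inj\<psi>: "inj_on \<psi> (A \<union> B)"
    proof (rule inj_onI)
      fix z z' assume z: "z \<in> A \<union> B" and z': "z' \<in> A \<union> B" and eq: "\<psi> z = \<psi> z'"
      show "z = z'"
      proof (cases "z = r0")
        case True
        show ?thesis
        proof (rule ccontr)
          assume "z \<noteq> z'"
          hence "z' \<noteq> r0" using True by simp
          hence "rep b1 = z'" using eq True unfolding \<psi>_def by simp
          moreover have "rep z' = rep b1" using rep_cong[OF same[OF z' \<open>z' \<noteq> r0\<close>]] .
          ultimately show False using nrep[OF z' \<open>z' \<noteq> r0\<close>] by simp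
        qed
      next
        case False
        show ?thesis
        proof (cases "z' = r0")
          case True
          have "rep b1 = z" using eq True False unfolding \<psi>_def by simp
          moreover have "rep z = rep b1" using rep_cong[OF same[OF z False]] .
          ultimately show ?thesis using nrep[OF z False] by simp
        next
          case False
          thus ?thesis using eq \<open>z \<noteq> r0\<close> unfolding \<psi>_def by simp
        qed
      qed
    qed
    have sub\<psi>: "\<psi> ` (A \<union> B) \<subseteq> V"
    proof (rule image_subsetI)
      fix z assume z: "z \<in> A \<union> B"
      show "\<psi> z \<in> V"
      proof (cases "z = r0")
        case True
        have "rep b1 \<in> W" using rep_in[OF b1W] clW by blast
        thus ?thesis using True unfolding \<psi>_def W_def by simp
      next
        case False
        have "z \<in> W" using nonr0[of z] AB(1,2) z False by blast
        thus ?thesis using False unfolding \<psi>_def W_def by simp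
      qed
    qed
    have ed\<psi>: "\<forall>a\<in>A. \<forall>b\<in>B. {\<psi> a, \<psi> b} \<in> E"
    proof (intro ballI)
      fix a b assume a: "a \<in> A" and b: "b \<in> B"
      have ab: "{a,b} \<in> F" using AB(6) a b by blast
      have anb: "a \<noteq> b" using neq a b .
      show "{\<psi> a, \<psi> b} \<in> E"
      proof (cases "a = r0")
        case True
        hence br: "b \<noteq> r0" using anb by simp
        have "{b, r0} \<in> F" using ab True by (simp add: insert_commute)
        hence "{b, rep b} \<in> E" using E2 br by blast
        moreover have "rep b = rep b1" using rep_cong[OF same] b br by blast
        ultimately show ?thesis using True br unfolding \<psi>_def by (simp add: insert_commute)
      next
        case False
        show ?thesis
        proof (cases "b = r0")
          case True
          have "{a, rep a} \<in> E" using E2 ab True False by blast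
          moreover have "rep a = rep b1" using rep_cong[OF same] a False by blast
          ultimately show ?thesis using True False unfolding \<psi>_def by simp
        next
          case bF: False
          have "{a,b} \<in> E" using E1[OF ab False bF anb] by simp
          thus ?thesis using False bF unfolding \<psi>_def by simp
        qed
      qed
    qed
    have "contains_Klt V E l t" using Klt_pull[OF inj\<psi> AB(3) AB(4) AB(5) sub\<psi> ed\<psi>] .
    thus False using nK by simp
  qed
  show ?thesis using sgU nK' cardU cardF unfolding comps_def EW_def by blast
qed

lemma two_choose2: "2 * (x choose 2) = x * (x - 1)"
proof (induction x)
  case 0
  then show ?case by simp
next
  case (Suc x)
  have "Suc x choose 2 = (x choose 1) + (x choose 2)"
    by (simp add: numeral_2_eq_2)
  hence "2 * (Suc x choose 2) = 2 * x + x * (x - 1)" using Suc by simp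
  also have "\<dots> = Suc x * (Suc x - 1)" by (cases x) (simp_all add: algebra_simps)
  finally show ?case .
qed

lemma real_choose2: "real (x choose 2) = real x * (real x - 1) / 2"
proof -
  have "real (2 * (x choose 2)) = real (x * (x - 1))" using two_choose2 by metis
  hence "2 * real (x choose 2) = real x * real (x - 1)" by simp
  moreover have "real (x - 1) = real x - 1" if "x \<ge> 1" using that by simp
  ultimately show ?thesis by (cases "x = 0") auto
qed

lemma main_bound:
  fixes l t s n x :: nat and E :: "nat set set"
  assumes "t \<ge> l" and "s \<ge> l + 1" and "l + 1 \<ge> 3"
    and "n \<ge> 2 * ((3 * s) choose 2)"
    and "1 \<le> x" and "x \<le> l - 1"
    and sg: "simple_graph {0..<n} E" and nK: "\<not> contains_Klt {0..<n} E l t"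
    and nM: "\<not> contains_matching E (s + 1)" and xv: "xnum {0..<n} E s = x"
  shows "real (card E) \<le>
     real (l - 1) * real n + real (ex_Klt (2 * (s - l + 1) + 1) l t) - real l * (real l - 1) / 2"
proof -
  define V where "V = {0..<n}"
  have sgV: "simple_graph V E" unfolding V_def by (rule sg)
  have nKV: "\<not> contains_Klt V E l t" unfolding V_def by (rule nK)
  have fV: "finite V" unfolding V_def by simp
  have cV: "card V = n" unfolding V_def by simp
  have l2: "l \<ge> 2" and t2: "t \<ge> 2" using assms(1,3) by auto
  define AS where "AS = {card X | X. admissible V E s X}"
  obtain X0 where "admissible V E s X0" using berge[OF sgV nM] by blast
  hence ASne: "AS \<noteq> {}" unfolding AS_def by blast
  have "AS \<subseteq> {0..n}"
  proof
    fix c assume "c \<in> AS"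
    then obtain X where "c = card X" "admissible V E s X" unfolding AS_def by blast
    hence "c \<le> card V" using fV unfolding admissible_def by (simp add: card_mono)
    thus "c \<in> {0..n}" using cV by simp
  qed
  hence fAS: "finite AS" by (rule finite_subset) simp
  have "x \<in> AS" using xv Max_in[OF fAS ASne] unfolding xnum_def AS_def V_def by simp
  then obtain X where X: "admissible V E s X" "card X = x" unfolding AS_def by blast
  have XV: "X \<subseteq> V" using X(1) unfolding admissible_def by simp
  have sumX: "x + (\<Sum>C\<in>components_minus V E X. card C div 2) \<le> s" using X unfolding admissible_def by simp
  define \<Sigma> where "\<Sigma> = (\<Sum>C\<in>components_minus V E X. card C div 2)"
  have xn: "x \<le> n" using card_mono[OF fV XV] X(2) cV by simp
  define EW where "EW = {e\<in>E. e \<subseteq> V - X}"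
  define EXs where "EXs = {e\<in>E. e \<inter> X \<noteq> {}}"
  have fE: "finite E" by (rule sg_finite_E[OF sgV])
  have "E \<subseteq> EW \<union> EXs"
  proof
    fix e assume e: "e \<in> E"
    have "e \<subseteq> V" using sg_sub[OF sgV e] .
    thus "e \<in> EW \<union> EXs" unfolding EW_def EXs_def using e by blast
  qed
  hence "card E \<le> card (EW \<union> EXs)" using fE unfolding EW_def EXs_def by (intro card_mono) auto
  also have "\<dots> \<le> card EW + card EXs" by (rule card_Un_le)
  finally have cE: "card E \<le> card EW + card EXs" .
  have cEX: "card EXs \<le> (x choose 2) + x * (n - x)"
    using EX_bound[OF sgV XV] X(2) cV unfolding EXs_def by simp
  obtain U :: "nat set" and F where UF: "simple_graph U F" "\<not> contains_Klt U F l t"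
      "card U \<le> 2 * \<Sigma> + 1" "card F = card EW"
    using glue[OF sgV nKV l2 t2, of X] unfolding \<Sigma>_def EW_def by blast
  have \<Sigma>s: "\<Sigma> \<le> s - x" using sumX unfolding \<Sigma>_def by simp
  have chx: "real (x choose 2) = real x * (real x - 1) / 2" by (rule real_choose2)
  have rnx: "real (n - x) = real n - real x" using xn by simp
  have base: "real (card E) \<le> real x * (real x - 1) / 2 + real x * (real n - real x) + real (card EW)"
  proof -
    have "real (card E) \<le> real (card EW) + real (card EXs)" using cE by linarith
    moreover have "real (card EXs) \<le> real (x choose 2) + real x * real (n - x)"
      using cEX by (metis of_nat_add of_nat_le_iff of_nat_mult)
    ultimately show ?thesis unfolding chx rnx by linarith
  qed
  have exnn: "real (ex_Klt (2 * (s - l + 1) + 1) l t) \<ge> 0" by simp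
  have rl1: "real (l - 1) = real l - 1" using l2 by simp
  show ?thesis
  proof (cases "x = l - 1")
    case True
    have "card U \<le> 2 * (s - l + 1) + 1" using UF(3) \<Sigma>s True l2 assms(2) by simp
    hence "card F \<le> ex_Klt (2 * (s - l + 1) + 1) l t"
      using ex_Klt_ge[OF UF(1) UF(2)] l2 t2 by simp
    hence cw: "real (card EW) \<le> real (ex_Klt (2 * (s - l + 1) + 1) l t)" using UF(4) by simp
    have xr: "real x = real l - 1" using True l2 by simp
    have eq: "real x * (real x - 1) / 2 + real x * (real n - real x) = (real l - 1) * real n - real l * (real l - 1) / 2"
      unfolding xr by (simp add: field_simps)
    show ?thesis unfolding rl1 using base cw eq by linarith
  next
    case False
    hence xl: "x + 2 \<le> l" using assms(6) l2 by simp
    have "card U \<le> 2 * s + 1" using UF(3) \<Sigma>s by simp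
    hence "2 * (card U choose 2) \<le> (2 * s + 1) * (2 * s)" unfolding two_choose2
      by (intro mult_le_mono) simp_all
    moreover have "card F \<le> card U choose 2" by (rule sg_card_le_choose[OF UF(1)])
    ultimately have "2 * card EW \<le> (2 * s + 1) * (2 * s)" using UF(4) by simp
    hence cw: "2 * real (card EW) \<le> (2 * real s + 1) * (2 * real s)"
      by (metis (mono_tags, lifting) of_nat_le_iff of_nat_mult of_nat_add of_nat_numeral of_nat_1)
    have "2 * ((3 * s) choose 2) = (3 * s) * (3 * s - 1)" by (rule two_choose2)
    hence "real n \<ge> real (3 * s) * real (3 * s - 1)" using assms(4) by (metis of_nat_le_iff of_nat_mult)
    moreover have "real (3 * s - 1) = 3 * real s - 1" using assms(2,3) by simp
    ultimately have nb: "real n \<ge> 3 * real s * (3 * real s - 1)" by simp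
    have xlr: "real x + 2 \<le> real l" using xl by simp
    have lsr: "real l + 1 \<le> real s" using assms(2) by simp
    have l2r: "real l \<ge> 2" using l2 by simp
    have x1: "real x \<ge> 1" using assms(5) by simp
    have prod: "(real l - 2 - real x) * real n \<ge> 0" using xlr by simp
    hence prod': "real l * real n - 2 * real n - real x * real n \<ge> 0" by (simp add: algebra_simps)
    have cw': "2 * real (card EW) \<le> 4 * (real s * real s) + 2 * real s" using cw by (simp add: algebra_simps)
    have nb': "real n \<ge> 9 * (real s * real s) - 3 * real s" using nb by (simp add: algebra_simps)
    have xx: "real x * real x \<ge> real x" using x1 by (simp add: mult_le_cancel_left1)
    have ll: "real l * real l \<le> real s * real s" using lsr l2r by (intro mult_mono) auto
    have ss: "real s * real s \<ge> real s" using lsr l2r by (simp add: mult_le_cancel_left1)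
    have "real x * (real x - 1) / 2 + real x * (real n - real x) + real (card EW)
        \<le> (real l - 1) * real n - real l * (real l - 1) / 2"
    proof -
      have e1: "real x * (real x - 1) / 2 + real x * (real n - real x) + real (card EW)
          = (- (real x * real x) - real x + 2 * (real x * real n) + 2 * real (card EW)) / 2"
        by (simp add: field_simps)
      have e2: "(real l - 1) * real n - real l * (real l - 1) / 2
          = (2 * (real l * real n) - 2 * real n - real l * real l + real l) / 2"
        by (simp add: field_simps)
      have "- (real x * real x) - real x + 2 * (real x * real n) + 2 * real (card EW)
          \<le> 2 * (real l * real n) - 2 * real n - real l * real l + real l"
        using prod' cw' nb' xx ll ss l2r by linarith
      thus ?thesis unfolding e1 e2 by (simp add: divide_right_mono)
    qed
    thus ?thesis using base exnn unfolding rl1 by linarith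
  qed
qed

theorem corollary3p3:
  fixes l t s n x :: nat
  assumes "t \<ge> l" and "s \<ge> l + 1" and "l + 1 \<ge> 3"
    and "n \<ge> 2 * ((3 * s) choose 2)"
    and "1 \<le> x" and "x \<le> l - 1"
  shows "real (ex_KM n l t s x) \<le>
     real (l - 1) * real n + real (ex_Klt (2 * (s - l + 1) + 1) l t) - real l * (real l - 1) / 2"
proof -
  define S where "S = {card E | E. simple_graph {0..<n} E \<and> \<not> contains_Klt {0..<n} E l t
      \<and> \<not> contains_matching E (s + 1) \<and> xnum {0..<n} E s = x}"
  define R where "R = real (l - 1) * real n + real (ex_Klt (2 * (s - l + 1) + 1) l t) - real l * (real l - 1) / 2"
  have key: "real c \<le> R" if "c \<in> S" for c
  proof -
    obtain E where E: "c = card E" "simple_graph {0..<n} E" "\<not> contains_Klt {0..<n} E l t"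
      "\<not> contains_matching E (s + 1)" "xnum {0..<n} E s = x" using \<open>c \<in> S\<close> unfolding S_def by blast
    show ?thesis unfolding R_def E(1) using main_bound[OF assms E(2-5)] .
  qed
  have R0: "R \<ge> 0"
  proof -
    have l2: "l \<ge> 2" using assms(3) by simp
    have "real l \<le> real n"
    proof -
      have "2 * ((3 * s) choose 2) = (3 * s) * (3 * s - 1)" by (rule two_choose2)
      moreover have "(3 * s) * (3 * s - 1) \<ge> 3 * s" using assms(2,3) by simp
      ultimately have "n \<ge> l" using assms(2,4) by linarith
      thus ?thesis by simp
    qed
    hence A: "real l * (real l - 1) \<le> real n * (real l - 1)" using l2 by (intro mult_right_mono) auto
    have A': "real l * real l - real l \<le> real n * real l - real n" using A by (simp add: algebra_simps)
    have B: "real l * real n \<ge> real n" using l2 by (simp add: mult_le_cancel_right1)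
    have C: "real (l - 1) * real n = real l * real n - real n" using l2 by (simp add: algebra_simps)
    have D: "real l * (real l - 1) / 2 = (real l * real l - real l) / 2" by (simp add: algebra_simps)
    have "real l * (real l - 1) / 2 \<le> real (l - 1) * real n"
      unfolding C D using A' B by (simp add: algebra_simps field_simps)
    moreover have "real (ex_Klt (2 * (s - l + 1) + 1) l t) \<ge> 0" by simp
    ultimately show ?thesis unfolding R_def by linarith
  qed
  have fS: "finite S"
  proof (rule finite_subset)
    show "S \<subseteq> {0..card (Pow {0..<n::nat})}"
    proof
      fix c assume "c \<in> S"
      then obtain E where E: "c = card E" "simple_graph {0..<n} E" unfolding S_def by blast
      have "E \<subseteq> Pow {0..<n}" using sg_sub[OF E(2)] by blast
      hence "card E \<le> card (Pow {0..<n})" by (intro card_mono) auto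
      thus "c \<in> {0..card (Pow {0..<n::nat})}" using E(1) by simp
    qed
  qed simp
  have "ex_KM n l t s x = Sup S" unfolding ex_KM_def S_def ..
  show ?thesis
  proof (cases "S = {}")
    case True
    thus ?thesis using R0 \<open>ex_KM n l t s x = Sup S\<close> unfolding R_def by (simp add: Sup_nat_def)
  next
    case False
    hence "Sup S = Max S" by (simp add: Sup_nat_def)
    moreover have "Max S \<in> S" using fS False by (rule Max_in)
    ultimately show ?thesis using key \<open>ex_KM n l t s x = Sup S\<close> unfolding R_def by simp
  qed
qed

end
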